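(* Let $0\le r\le n$. Every operator $T=P(x,u_0,\dots,u_r)$, with $P$ a real polynomial, can be written uniquely as a finite sum $$T=p(x)+\sum_{i}p_i(x)K_{ri}+\sum_{i\le j}p_{ij}(x)K_{ri}K_{rj}+\sum_{i\le j\le k}p_{ijk}(x)K_{ri}K_{rj}K_{rk}+\cdots$$ with all indices in $\{0,\dots,r\}$, coefficients $p,p_i,p_{ij},\dots\in\mathbb R[x]$, and products taken pointwise. Moreover $T(\mathcal P_n)\subset\mathcal P_n$ if and only if every coefficient of a term of degree $\ell$ in the $K_{ri}$ lies in $\mathcal P_{\ell r-(\ell-1)n}$; that is, $p\in\mathcal P_n$, $p_i\in\mathcal P_r$, $p_{ij}\in\mathcal P_{2r-n}$, $p_{ijk}\in\mathcal P_{3r-2n}$, etc.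
   Context: Operators of order $\le r$ are identified with polynomials $P(x,u_0,\dots,u_r)$ acting on a smooth $f$ by $P[f](x)=P(x,f(x),f'(x),\dots,f^{(r)}(x))$. $\mathcal P_s$ is the space of real polynomials in $x$ of degree $\le s$, and $\mathcal P_s=\{0\}$ for $s<0$. For $0\le j\le r\le n$, $K_{rj}$ is the linear operator $K_{rj}=\sum_{k=0}^{r-j}(-1)^k\binom{n-k-j}{n-r}\frac{x^k}{k!}u_{k+j}$ (equivalently $K_{rj}=\frac{1}{(r-j)!}(n-j-xD)_{r-j}D^j$ with $D=d/dx$ and $(a-xD)_k=(-1)^k(xD-a)(xD-a+1)\cdots(xD-a+k-1)$). *)

theory Defs
  imports "HOL-Computational_Algebra.Polynomial" "HOL-Library.Poly_Mapping" "HOL-Library.Multiset"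
begin

text \<open>A differential operator P(x,u_0,...,u_r) with P a real polynomial is represented as
  a polynomial in the variables u_0,u_1,... (monomials are finitely supported exponent maps
  nat =>0 nat, variable i standing for u_i) with coefficients in R[x].\<close>

type_synonym diffop = "(nat \<Rightarrow>\<^sub>0 nat) \<Rightarrow>\<^sub>0 real poly"

definition order_le :: "nat \<Rightarrow> diffop \<Rightarrow> bool" where
  "order_le r T \<longleftrightarrow> (\<forall>m \<in> Poly_Mapping.keys T. Poly_Mapping.keys m \<subseteq> {0..r})"

definition apply_op :: "diffop \<Rightarrow> real poly \<Rightarrow> real \<Rightarrow> real" where
  "apply_op T f x = (\<Sum>m\<in>Poly_Mapping.keys T. poly (Poly_Mapping.lookup T m) x *
       (\<Prod>i\<in>Poly_Mapping.keys m. (poly ((pderiv ^^ i) f) x) ^ Poly_Mapping.lookup m i))"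

definition coeff_op :: "real poly \<Rightarrow> diffop" where
  "coeff_op p = Poly_Mapping.single 0 p"

definition uvar :: "nat \<Rightarrow> diffop" where
  "uvar i = Poly_Mapping.single (Poly_Mapping.single i 1) 1"

definition K :: "nat \<Rightarrow> nat \<Rightarrow> nat \<Rightarrow> diffop" where
  "K n r j = (\<Sum>k = 0..r - j.
      coeff_op (monom ((-1) ^ k * real ((n - k - j) choose (n - r)) / fact k) k) * uvar (k + j))"

definition Pset :: "int \<Rightarrow> real poly set" where
  "Pset s = (if s < 0 then {0} else {p. degree p \<le> nat s})"

text \<open>Admissible coefficient families: indexed by multisets of indices in {0..r}
  (a multiset M = {i <= j <= ...} stands for the product K_ri K_rj ...), finitely many nonzero.\<close>
definition admissible :: "nat \<Rightarrow> (nat multiset \<Rightarrow> real poly) \<Rightarrow> bool" where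
  "admissible r c \<longleftrightarrow> finite {M. c M \<noteq> 0} \<and> (\<forall>M. c M \<noteq> 0 \<longrightarrow> set_mset M \<subseteq> {0..r})"

definition K_expansion :: "nat \<Rightarrow> nat \<Rightarrow> (nat multiset \<Rightarrow> real poly) \<Rightarrow> diffop" where
  "K_expansion n r c = (\<Sum>M \<in> {M. c M \<noteq> 0}. coeff_op (c M) * (\<Prod>i\<in>#M. K n r i))"

definition preserves :: "nat \<Rightarrow> diffop \<Rightarrow> bool" where
  "preserves n T \<longleftrightarrow> (\<forall>f. degree f \<le> n \<longrightarrow> (\<exists>q. degree q \<le> n \<and> (\<forall>x. apply_op T f x = poly q x)))"

end

theory Submission
  imports Defs
begin


definition mono_pm :: "(nat \<Rightarrow> real) \<Rightarrow> (nat \<Rightarrow>\<^sub>0 nat) \<Rightarrow> real" where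
  "mono_pm v m = (\<Prod>i\<in>Poly_Mapping.keys m. v i ^ Poly_Mapping.lookup m i)"

definition ev :: "(nat \<Rightarrow> real) \<Rightarrow> real \<Rightarrow> diffop \<Rightarrow> real" where
  "ev v x T = (\<Sum>m\<in>Poly_Mapping.keys T. poly (Poly_Mapping.lookup T m) x * mono_pm v m)"

lemma mono_pm_superset:
  assumes "finite S" "Poly_Mapping.keys m \<subseteq> S"
  shows "mono_pm v m = (\<Prod>i\<in>S. v i ^ Poly_Mapping.lookup m i)"
  unfolding mono_pm_def
  by (rule prod.mono_neutral_left) (use assms in \<open>auto simp: in_keys_iff\<close>)

lemma mono_pm_add: "mono_pm v (a + b) = mono_pm v a * mono_pm v b"
proof -
  let ?S = "Poly_Mapping.keys a \<union> Poly_Mapping.keys b"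
  have "mono_pm v (a + b) = (\<Prod>i\<in>?S. v i ^ Poly_Mapping.lookup (a+b) i)"
    by (rule mono_pm_superset) (auto dest: subsetD[OF keys_add])
  also have "\<dots> = (\<Prod>i\<in>?S. v i ^ Poly_Mapping.lookup a i) * (\<Prod>i\<in>?S. v i ^ Poly_Mapping.lookup b i)"
    by (simp add: lookup_add power_add prod.distrib)
  also have "\<dots> = mono_pm v a * mono_pm v b"
    by (subst (1 2) mono_pm_superset[of ?S]) auto
  finally show ?thesis .
qed

lemma mono_pm_zero [simp]: "mono_pm v 0 = 1"
  by (simp add: mono_pm_def)

lemma mono_pm_single: "mono_pm v (Poly_Mapping.single i k) = v i ^ k"
  by (cases "k = 0") (simp_all add: mono_pm_def)

lemma ev_superset:
  assumes "finite S" "Poly_Mapping.keys T \<subseteq> S"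
  shows "ev v x T = (\<Sum>m\<in>S. poly (Poly_Mapping.lookup T m) x * mono_pm v m)"
  unfolding ev_def
  by (rule sum.mono_neutral_left) (use assms in \<open>auto simp: in_keys_iff\<close>)

lemma ev_add: "ev v x (A + B) = ev v x A + ev v x B"
proof -
  let ?S = "Poly_Mapping.keys A \<union> Poly_Mapping.keys B"
  have "ev v x (A + B) = (\<Sum>m\<in>?S. poly (Poly_Mapping.lookup (A+B) m) x * mono_pm v m)"
    by (rule ev_superset) (auto dest: subsetD[OF keys_add])
  also have "\<dots> = (\<Sum>m\<in>?S. poly (Poly_Mapping.lookup A m) x * mono_pm v m) + (\<Sum>m\<in>?S. poly (Poly_Mapping.lookup B m) x * mono_pm v m)"
    by (simp add: lookup_add distrib_right sum.distrib)
  also have "\<dots> = ev v x A + ev v x B"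
    by (subst (1 2) ev_superset[of ?S]) auto
  finally show ?thesis .
qed

lemma ev_zero [simp]: "ev v x 0 = 0"
  by (simp add: ev_def)

lemma ev_sum: "ev v x (\<Sum>i\<in>A. f i) = (\<Sum>i\<in>A. ev v x (f i))"
  by (induction A rule: infinite_finite_induct) (auto simp: ev_add)

lemma ev_single: "ev v x (Poly_Mapping.single m p) = poly p x * mono_pm v m"
  by (simp add: ev_def)

lemma pm_sum_single: "(\<Sum>k\<in>Poly_Mapping.keys A. Poly_Mapping.single k (Poly_Mapping.lookup A k)) = A"
proof (rule poly_mapping_eqI)
  fix k
  show "Poly_Mapping.lookup (\<Sum>k\<in>Poly_Mapping.keys A. Poly_Mapping.single k (Poly_Mapping.lookup A k)) k = Poly_Mapping.lookup A k"
    by (simp add: lookup_sum lookup_single when_def in_keys_iff sum.If_cases)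
qed

lemma ev_mult: "ev v x (A * B) = ev v x A * ev v x B"
proof -
  let ?KA = "Poly_Mapping.keys A" and ?KB = "Poly_Mapping.keys B"
  let ?a = "Poly_Mapping.lookup A" and ?b = "Poly_Mapping.lookup B"
  have "A * B = (\<Sum>k\<in>?KA. Poly_Mapping.single k (?a k)) * (\<Sum>l\<in>?KB. Poly_Mapping.single l (?b l))"
    by (simp add: pm_sum_single)
  also have "\<dots> = (\<Sum>k\<in>?KA. \<Sum>l\<in>?KB. Poly_Mapping.single (k + l) (?a k * ?b l))"
    by (simp add: sum_product mult_single)
  finally have "ev v x (A * B) = (\<Sum>k\<in>?KA. \<Sum>l\<in>?KB. poly (?a k) x * mono_pm v k * (poly (?b l) x * mono_pm v l))"
    by (simp add: ev_sum ev_single mono_pm_add mult_ac)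
  also have "\<dots> = ev v x A * ev v x B"
    by (simp add: ev_def sum_product)
  finally show ?thesis .
qed

lemma ev_one [simp]: "ev v x 1 = 1"
  by (simp add: ev_def)

lemma ev_coeff_op [simp]: "ev v x (coeff_op p) = poly p x"
  by (simp add: coeff_op_def ev_single)

lemma ev_uvar [simp]: "ev v x (uvar i) = v i"
  by (simp add: uvar_def ev_single mono_pm_single)

lemma ev_prod_mset: "ev v x (\<Prod>i\<in>#M. g i) = (\<Prod>i\<in>#M. ev v x (g i))"
  by (induction M) (auto simp: ev_mult)

lemma ev_K: "ev v x (K n r j) = (\<Sum>k = 0..r - j. (-1) ^ k * real ((n - k - j) choose (n - r)) / fact k * x ^ k * v (k + j))"
  by (simp add: K_def ev_sum ev_mult poly_monom)

lemma apply_op_ev: "apply_op T f x = ev (\<lambda>i. poly ((pderiv ^^ i) f) x) x T"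
  by (simp add: apply_op_def ev_def mono_pm_def)



lemma binom_id:
  "e \<le> a \<Longrightarrow> s \<le> a \<Longrightarrow>
   (\<Sum>k=0..s. (-1)^k * real ((a-k) choose (a-s)) * real (e choose k)) = real ((a-e) choose s)"
proof (induction e arbitrary: a s)
  case 0
  have "(\<Sum>k=0..s. (-1)^k * real ((a-k) choose (a-s)) * real (0 choose k)) = real (a choose (a-s))"
  proof -
    have "(\<Sum>k=Suc 0..s. (-1)^k * real ((a-k) choose (a-s)) * real (0 choose k)) = 0"
      by (rule sum.neutral) auto
    then show ?thesis by (simp add: sum.atLeast_Suc_atMost[of 0 s])
  qed
  also have "\<dots> = real (a choose s)"
    using 0 by (simp add: binomial_symmetric[of s a])
  finally show ?case by simp
next
  case (Suc e)
  show ?case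
  proof (cases s)
    case 0
    then show ?thesis by simp
  next
    case (Suc t)
    define g where "g k = (-1)^k * real ((a-k) choose (a-s))" for k
    have lhs0: "(\<Sum>k=0..s. (-1)^k * real ((a-k) choose (a-s)) * real (Suc e choose k))
       = (\<Sum>k=0..s. g k * real (Suc e choose k))" unfolding g_def by simp
    also have "\<dots> = g 0 + (\<Sum>k=0..t. g (Suc k) * real (Suc e choose Suc k))"
      unfolding Suc by (simp only: sum.atLeast0_atMost_Suc_shift comp_def) simp
    also have "\<dots> = g 0 + (\<Sum>k=0..t. g (Suc k) * real (e choose Suc k) + g (Suc k) * real (e choose k))"
    proof -
      have "\<And>k. g (Suc k) * real (Suc e choose Suc k) = g (Suc k) * real (e choose Suc k) + g (Suc k) * real (e choose k)"
        by (simp add: distrib_left)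
      then show ?thesis by simp
    qed
    also have "\<dots> = g 0 + (\<Sum>k=0..t. g (Suc k) * real (e choose Suc k)) + (\<Sum>k=0..t. g (Suc k) * real (e choose k))"
      by (simp only: sum.distrib add.assoc)
    finally have lhs: "(\<Sum>k=0..s. (-1)^k * real ((a-k) choose (a-s)) * real (Suc e choose k))
       = g 0 + (\<Sum>k=0..t. g (Suc k) * real (e choose Suc k)) + (\<Sum>k=0..t. g (Suc k) * real (e choose k))" .
    have A: "g 0 + (\<Sum>k=0..t. g (Suc k) * real (e choose Suc k)) = real ((a-e) choose s)"
    proof -
      have "g 0 + (\<Sum>k=0..t. g (Suc k) * real (e choose Suc k)) = (\<Sum>k=0..s. g k * real (e choose k))"
        unfolding Suc by (simp add: sum.atLeast0_atMost_Suc_shift del: sum.cl_ivl_Suc)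
      also have "\<dots> = real ((a-e) choose s)"
        unfolding g_def using Suc.IH[of a s] Suc.prems by simp
      finally show ?thesis .
    qed
    have B: "(\<Sum>k=0..t. g (Suc k) * real (e choose k)) = - real ((a-1-e) choose t)"
    proof -
      have "(\<Sum>k=0..t. g (Suc k) * real (e choose k))
          = - (\<Sum>k=0..t. (-1)^k * real ((a-1-k) choose (a-1-t)) * real (e choose k))"
      proof -
        have "\<And>k. g (Suc k) * real (e choose k) = - ((-1)^k * real ((a-1-k) choose (a-1-t)) * real (e choose k))"
          unfolding g_def \<open>s = Suc t\<close> by simp
        then show ?thesis by (simp add: sum_negf)
      qed
      also have "\<dots> = - real ((a-1-e) choose t)"
        using Suc.IH[of "a-1" t] Suc.prems \<open>s = Suc t\<close> by simp
      finally show ?thesis .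
    qed
    have C: "a - e = Suc (a - 1 - e)" using Suc.prems by simp
    show ?thesis
      unfolding lhs A B using Suc.prems
      by (simp add: C \<open>s = Suc t\<close>)
  qed
qed

definition KA :: "nat \<Rightarrow> nat \<Rightarrow> nat \<Rightarrow> real poly \<Rightarrow> real poly" where
  "KA n r j f = (\<Sum>k = 0..r - j. monom ((-1)^k * real ((n-k-j) choose (n-r)) / fact k) k * (pderiv ^^ (k+j)) f)"

lemma ev_K_KA: "ev (\<lambda>i. poly ((pderiv^^i) f) x) x (K n r j) = poly (KA n r j f) x"
  by (simp add: ev_K KA_def poly_sum poly_monom mult_ac)

lemma poch_fact: "pochhammer (real (Suc m)) k = fact (m+k) / fact m"
proof -
  have "fact (m+k) = (fact m :: real) * pochhammer (1 + real m) k"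
    using pochhammer_product'[of "1::real" m k] by (simp add: pochhammer_fact)
  then show ?thesis by (simp add: field_simps)
qed

lemma coeff_KA:
  assumes "j \<le> r" "r \<le> n" "e + j \<le> n"
  shows "coeff (KA n r j f) e = coeff f (e+j) * (fact (e+j) / fact e) * real ((n-j-e) choose (r-j))"
proof -
  have "coeff (KA n r j f) e = (\<Sum>k = 0..r - j. coeff (monom ((-1)^k * real ((n-k-j) choose (n-r)) / fact k) k * (pderiv ^^ (k+j)) f) e)"
    by (simp add: KA_def coeff_sum)
  also have "\<dots> = (\<Sum>k = 0..r - j. coeff f (e+j) * (fact (e+j) / fact e) *
      ((-1)^k * real (((n-j)-k) choose ((n-j)-(r-j))) * real (e choose k)))"
  proof (rule sum.cong[OF refl])
    fix k assume "k \<in> {0..r-j}"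
    show "coeff (monom ((-1)^k * real ((n-k-j) choose (n-r)) / fact k) k * (pderiv ^^ (k+j)) f) e =
      coeff f (e+j) * (fact (e+j) / fact e) *
      ((-1)^k * real (((n-j)-k) choose ((n-j)-(r-j))) * real (e choose k))"
    proof (cases "e < k")
      case True then show ?thesis by (simp add: coeff_monom_mult)
    next
      case False
      then have ek: "e - k + (k + j) = e + j" by auto
      have "real (e choose k) = fact e / (fact k * fact (e - k))"
        using False by (simp add: binomial_fact)
      moreover have "n - k - j = n - j - k" "n - r = n - j - (r - j)" using assms by auto
      moreover have "pochhammer (real (Suc (e-k))) (k+j) = fact (e+j) / fact (e-k)"
        using poch_fact[of "e-k" "k+j"] ek by simp
      ultimately show ?thesis using False
        by (simp add: coeff_monom_mult coeff_higher_pderiv ek del: of_nat_Suc)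
    qed
  qed
  also have "\<dots> = coeff f (e+j) * (fact (e+j) / fact e) *
      (\<Sum>k = 0..r - j. (-1)^k * real (((n-j)-k) choose ((n-j)-(r-j))) * real (e choose k))"
    by (simp add: sum_distrib_left)
  also have "\<dots> = coeff f (e+j) * (fact (e+j) / fact e) * real ((n-j-e) choose (r-j))"
    using binom_id[of e "n-j" "r-j"] assms by simp
  finally show ?thesis .
qed

lemma degree_KA:
  assumes "j \<le> r" "r \<le> n" "degree f \<le> n"
  shows "degree (KA n r j f) \<le> n - r"
proof (rule degree_le, intro allI impI)
  fix e assume e: "n - r < e"
  show "coeff (KA n r j f) e = 0"
  proof (cases "e + j \<le> n")
    case True
    then have "(n-j-e) choose (r-j) = 0" using e assms by (simp add: binomial_eq_0)
    then show ?thesis using coeff_KA[OF assms(1,2) True] by simp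
  next
    case False
    then have "coeff f (e+j) = 0" using assms by (intro coeff_eq_0) simp
    then show ?thesis
      by (auto simp add: KA_def coeff_sum coeff_monom_mult coeff_higher_pderiv intro!: sum.neutral)
  qed
qed

lemma lead_KA:
  assumes "j \<le> r" "r \<le> n"
  shows "coeff (KA n r j f) (n - r) = coeff f (n-r+j) * (fact (n-r+j) / fact (n-r))"
  using coeff_KA[OF assms, of "n-r" f] assms by simp



lemma mset_split_k: "M = filter_mset (\<lambda>i. i \<noteq> k) M + replicate_mset (count M k) k"
  by (rule multiset_eqI) auto

lemma prod_split_k:
  "(\<Prod>i\<in>#M. (w(k := t)) i) = (\<Prod>i\<in>#filter_mset (\<lambda>i. i \<noteq> k) M. w i) * t ^ count M k"
proof -
  have "(\<Prod>i\<in>#M. (w(k := t)) i) = (\<Prod>i\<in>#filter_mset (\<lambda>i. i \<noteq> k) M + replicate_mset (count M k) k. (w(k := t)) i)"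
    by (subst mset_split_k[of M k]) simp
  also have "\<dots> = (\<Prod>i\<in>#filter_mset (\<lambda>i. i \<noteq> k) M. (w(k := t)) i) * t ^ count M k"
    by simp
  also have "(\<Prod>i\<in>#filter_mset (\<lambda>i. i \<noteq> k) M. (w(k := t)) i) = (\<Prod>i\<in>#filter_mset (\<lambda>i. i \<noteq> k) M. w i)"
    by (rule arg_cong[where f=prod_mset], rule image_mset_cong) auto
  finally show ?thesis .
qed

lemma mp_zero:
  assumes "finite V"
  shows "finite S \<Longrightarrow> (\<forall>M\<in>S. set_mset M \<subseteq> V) \<Longrightarrow>
    (\<And>w. (\<Sum>M\<in>S. a M * (\<Prod>i\<in>#M. w i)) = (0::real)) \<Longrightarrow> M \<in> S \<Longrightarrow> a M = 0"
  using assms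
proof (induction V arbitrary: S a M rule: finite_induct)
  case empty
  then have "\<forall>M'\<in>S. M' = {#}" by auto
  with empty.prems(4) have S: "S = {{#}}" and M: "M = {#}" by auto
  show ?case using empty.prems(3)[of "\<lambda>_. 0"] by (simp add: S M)
next
  case (insert k V')
  define F where "F M = filter_mset (\<lambda>i. i \<noteq> k) M" for M
  define j where "j = count M k"
  define Sj where "Sj = {M'\<in>S. count M' k = j}"
  have key: "(\<Sum>M'\<in>Sj. a M' * (\<Prod>i\<in>#F M'. w i)) = 0" for w
  proof -
    define P where "P = (\<Sum>M'\<in>S. monom (a M' * (\<Prod>i\<in>#F M'. w i)) (count M' k))"
    have "poly P t = 0" for t
    proof -
      have "poly P t = (\<Sum>M'\<in>S. a M' * (\<Prod>i\<in>#M'. (w(k := t)) i))"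
        unfolding P_def poly_sum poly_monom
        by (rule sum.cong[OF refl]) (simp only: prod_split_k F_def mult_ac)
      also have "\<dots> = 0" by (rule insert.prems(3))
      finally show ?thesis .
    qed
    then have "P = 0" using poly_all_0_iff_0 by blast
    then have "coeff P j = 0" by simp
    moreover have "coeff P j = (\<Sum>M'\<in>S. if count M' k = j then a M' * (\<Prod>i\<in>#F M'. w i) else 0)"
      unfolding P_def by (simp add: coeff_sum coeff_monom when_def)
    moreover have "\<dots> = (\<Sum>M'\<in>Sj. a M' * (\<Prod>i\<in>#F M'. w i))"
      unfolding Sj_def using insert.prems(1) by (simp add: sum.inter_filter)
    ultimately show ?thesis by simp
  qed
  have inj: "inj_on F Sj"
  proof (rule inj_onI)
    fix M1 M2 assume "M1 \<in> Sj" "M2 \<in> Sj" "F M1 = F M2"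
    then show "M1 = M2" unfolding Sj_def F_def
      by (metis (mono_tags, lifting) mem_Collect_eq mset_split_k)
  qed
  define a' where "a' M' = a (M' + replicate_mset j k)" for M'
  have aF: "a' (F M') = a M'" if "M' \<in> Sj" for M'
    using that unfolding a'_def F_def Sj_def by (metis (mono_tags, lifting) mem_Collect_eq mset_split_k)
  have IH: "a' M' = 0" if "M' \<in> F ` Sj" for M'
  proof (rule insert.IH[of "F ` Sj"])
    show "finite (F ` Sj)" using insert.prems(1) by (simp add: Sj_def)
    show "\<forall>M\<in>F ` Sj. set_mset M \<subseteq> V'"
      using insert.prems(2) insert.hyps(2) unfolding Sj_def F_def by auto
    show "(\<Sum>M\<in>F ` Sj. a' M * (\<Prod>i\<in>#M. w i)) = 0" for w
    proof -
      have "(\<Sum>M\<in>F ` Sj. a' M * (\<Prod>i\<in>#M. w i)) = (\<Sum>M'\<in>Sj. a' (F M') * (\<Prod>i\<in>#F M'. w i))"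
        by (simp add: sum.reindex[OF inj])
      also have "\<dots> = (\<Sum>M'\<in>Sj. a M' * (\<Prod>i\<in>#F M'. w i))"
        by (rule sum.cong) (simp_all add: aF)
      finally show ?thesis using key by simp
    qed
    show "M' \<in> F ` Sj" by fact
  qed
  have "M \<in> Sj" using insert.prems(4) by (simp add: Sj_def j_def)
  then show ?case using IH[of "F M"] aF by auto
qed



lemma Kexp_superset:
  assumes "finite S" "{M. c M \<noteq> 0} \<subseteq> S"
  shows "K_expansion n r c = (\<Sum>M\<in>S. coeff_op (c M) * (\<Prod>i\<in>#M. K n r i))"
  unfolding K_expansion_def
  by (rule sum.mono_neutral_left) (use assms in \<open>auto simp: coeff_op_def\<close>)

definition Eset :: "nat \<Rightarrow> nat \<Rightarrow> diffop set" where
  "Eset n r = {t. \<exists>c. admissible r c \<and> t = K_expansion n r c}"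

lemma coeff_op_add: "coeff_op (p + q) = coeff_op p + coeff_op q"
  by (simp add: coeff_op_def single_add)

lemma coeff_op_mult: "coeff_op (p * q) = coeff_op p * coeff_op q"
  by (simp add: coeff_op_def mult_single)

lemma coeff_op_one [simp]: "coeff_op 1 = 1"
  by (simp add: coeff_op_def)

lemma coeff_op_zero [simp]: "coeff_op 0 = 0"
  by (simp add: coeff_op_def)

lemma coeff_op_minus_one: "coeff_op (-1) = -1"
  by (simp add: coeff_op_def single_uminus)

lemma E_add:
  assumes "t1 \<in> Eset n r" "t2 \<in> Eset n r"
  shows "t1 + t2 \<in> Eset n r"
proof -
  obtain c1 c2 where c: "admissible r c1" "t1 = K_expansion n r c1" "admissible r c2" "t2 = K_expansion n r c2"
    using assms unfolding Eset_def by auto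
  define S where "S = {M. c1 M \<noteq> 0} \<union> {M. c2 M \<noteq> 0}"
  have fS: "finite S" using c unfolding S_def admissible_def by auto
  define c where "c M = c1 M + c2 M" for M
  have adm: "admissible r c"
    unfolding admissible_def
  proof
    have "{M. c M \<noteq> 0} \<subseteq> S" unfolding S_def c_def by auto
    then show "finite {M. c M \<noteq> 0}" using fS by (rule finite_subset)
    show "\<forall>M. c M \<noteq> 0 \<longrightarrow> set_mset M \<subseteq> {0..r}"
    proof (intro allI impI)
      fix M assume "c M \<noteq> 0"
      then have "c1 M \<noteq> 0 \<or> c2 M \<noteq> 0" by (auto simp: c_def)
      then show "set_mset M \<subseteq> {0..r}" using c(1,3) unfolding admissible_def by blast
    qed
  qed
  have "K_expansion n r c = (\<Sum>M\<in>S. coeff_op (c M) * (\<Prod>i\<in>#M. K n r i))"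
    by (rule Kexp_superset[OF fS]) (auto simp: S_def c_def)
  also have "\<dots> = (\<Sum>M\<in>S. coeff_op (c1 M) * (\<Prod>i\<in>#M. K n r i)) + (\<Sum>M\<in>S. coeff_op (c2 M) * (\<Prod>i\<in>#M. K n r i))"
    by (simp add: c_def coeff_op_add distrib_right sum.distrib)
  also have "\<dots> = t1 + t2"
    unfolding c(2) c(4) by (subst (1 2) Kexp_superset[OF fS]) (auto simp: S_def)
  finally show ?thesis using adm unfolding Eset_def by auto
qed

lemma E_cmul:
  assumes "t \<in> Eset n r"
  shows "coeff_op p * t \<in> Eset n r"
proof -
  obtain c where c: "admissible r c" "t = K_expansion n r c"
    using assms unfolding Eset_def by auto
  define S where "S = {M. c M \<noteq> 0}"
  have fS: "finite S" using c unfolding S_def admissible_def by auto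
  define c' where "c' M = p * c M" for M
  have adm: "admissible r c'"
    unfolding admissible_def
  proof
    have "{M. c' M \<noteq> 0} \<subseteq> S" unfolding S_def c'_def by auto
    then show "finite {M. c' M \<noteq> 0}" using fS by (rule finite_subset)
    show "\<forall>M. c' M \<noteq> 0 \<longrightarrow> set_mset M \<subseteq> {0..r}"
      using c(1) unfolding admissible_def c'_def by auto
  qed
  have "K_expansion n r c' = (\<Sum>M\<in>S. coeff_op (c' M) * (\<Prod>i\<in>#M. K n r i))"
    by (rule Kexp_superset[OF fS]) (auto simp: S_def c'_def)
  also have "\<dots> = coeff_op p * t"
    unfolding c(2) K_expansion_def S_def c'_def
    by (simp add: coeff_op_mult sum_distrib_left mult.assoc)
  finally show ?thesis using adm unfolding Eset_def by auto
qed

lemma E_K: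
  assumes "t \<in> Eset n r" "j \<le> r"
  shows "K n r j * t \<in> Eset n r"
proof -
  obtain c where c: "admissible r c" "t = K_expansion n r c"
    using assms unfolding Eset_def by auto
  define S where "S = {M. c M \<noteq> 0}"
  have fS: "finite S" using c unfolding S_def admissible_def by auto
  define c' where "c' M = (if j \<in># M then c (M - {#j#}) else 0)" for M
  have sub: "{M. c' M \<noteq> 0} \<subseteq> add_mset j ` S"
  proof
    fix M assume "M \<in> {M. c' M \<noteq> 0}"
    then have "j \<in># M" "c (M - {#j#}) \<noteq> 0" unfolding c'_def by (auto split: if_splits)
    then show "M \<in> add_mset j ` S" unfolding S_def
      by (intro image_eqI[of _ _ "M - {#j#}"]) simp_all
  qed
  have adm: "admissible r c'"
    unfolding admissible_def
  proof
    show "finite {M. c' M \<noteq> 0}" using sub fS by (meson finite_imageI finite_subset)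
    show "\<forall>M. c' M \<noteq> 0 \<longrightarrow> set_mset M \<subseteq> {0..r}"
    proof (intro allI impI)
      fix M assume "c' M \<noteq> 0"
      then have "j \<in># M" "c (M - {#j#}) \<noteq> 0" unfolding c'_def by (auto split: if_splits)
      then have "set_mset (M - {#j#}) \<subseteq> {0..r}" using c(1) unfolding admissible_def by auto
      moreover have "M = add_mset j (M - {#j#})" using \<open>j \<in># M\<close> by simp
      ultimately show "set_mset M \<subseteq> {0..r}" using assms(2)
        by (metis atLeastAtMost_iff insert_subset le0 set_mset_add_mset_insert)
    qed
  qed
  have "K_expansion n r c' = (\<Sum>M\<in>add_mset j ` S. coeff_op (c' M) * (\<Prod>i\<in>#M. K n r i))"
    by (rule Kexp_superset) (use fS sub in auto)
  also have "\<dots> = (\<Sum>M\<in>S. coeff_op (c' (add_mset j M)) * (\<Prod>i\<in>#add_mset j M. K n r i))"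
    by (subst sum.reindex) (auto simp: inj_on_def)
  also have "\<dots> = (\<Sum>M\<in>S. K n r j * (coeff_op (c M) * (\<Prod>i\<in>#M. K n r i)))"
    by (simp add: c'_def mult_ac)
  also have "\<dots> = K n r j * t"
    unfolding c(2) K_expansion_def S_def by (simp add: sum_distrib_left)
  finally show ?thesis using adm unfolding Eset_def by auto
qed

lemma E_zero: "0 \<in> Eset n r"
proof -
  have "admissible r (\<lambda>_. 0)" by (simp add: admissible_def)
  moreover have "K_expansion n r (\<lambda>_. 0) = 0" by (simp add: K_expansion_def)
  ultimately show ?thesis unfolding Eset_def by (metis (mono_tags, lifting) mem_Collect_eq)
qed

lemma E_one: "1 \<in> Eset n r"
proof -
  define c :: "nat multiset \<Rightarrow> real poly" where "c M = (if M = {#} then 1 else 0)" for M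
  have sup: "{M. c M \<noteq> 0} = {{#}}" by (auto simp: c_def)
  have "admissible r c" unfolding admissible_def sup by (auto simp: c_def split: if_splits)
  moreover have "K_expansion n r c = 1"
    unfolding K_expansion_def sup by (simp add: c_def)
  ultimately show ?thesis unfolding Eset_def by (metis (mono_tags, lifting) mem_Collect_eq)
qed

lemma E_sum: "(\<And>i. i \<in> A \<Longrightarrow> f i \<in> Eset n r) \<Longrightarrow> (\<Sum>i\<in>A. f i) \<in> Eset n r"
  by (induction A rule: infinite_finite_induct) (auto simp: E_zero E_add)

lemma E_diff:
  assumes "t1 \<in> Eset n r" "t2 \<in> Eset n r"
  shows "t1 - t2 \<in> Eset n r"
proof -
  have "coeff_op (-1) * t2 \<in> Eset n r" by (rule E_cmul[OF assms(2)])
  then have "- t2 \<in> Eset n r" by (simp add: coeff_op_minus_one)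
  then show ?thesis using E_add[OF assms(1)] by (metis diff_conv_add_uminus)
qed

lemma K_split:
  assumes "j \<le> r" "r \<le> n"
  shows "K n r j = coeff_op [:real ((n - j) choose (n - r)):] * uvar j +
    (\<Sum>k = Suc 0..r - j. coeff_op (monom ((-1) ^ k * real ((n - k - j) choose (n - r)) / fact k) k) * uvar (k + j))"
  unfolding K_def by (simp add: sum.atLeast_Suc_atMost[of 0] monom_0)

lemma E_uvar:
  assumes "r \<le> n"
  shows "j \<le> r \<Longrightarrow> t \<in> Eset n r \<Longrightarrow> uvar j * t \<in> Eset n r"
proof (induction "r - j" arbitrary: j t rule: less_induct)
  case less
  define a0 where "a0 = real ((n - j) choose (n - r))"
  have a0: "a0 \<noteq> 0" unfolding a0_def using less.prems assms by simp
  define R where "R = (\<Sum>k = Suc 0..r - j. coeff_op (monom ((-1) ^ k * real ((n - k - j) choose (n - r)) / fact k) k) * (uvar (k + j) * t))"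
  have R: "R \<in> Eset n r"
    unfolding R_def
  proof (rule E_sum, rule E_cmul)
    fix k assume "k \<in> {Suc 0..r - j}"
    then show "uvar (k + j) * t \<in> Eset n r"
      using less.prems by (intro less.hyps) auto
  qed
  have eq: "K n r j * t = coeff_op [:a0:] * (uvar j * t) + R"
    unfolding K_split[OF less.prems(1) assms] R_def a0_def
    by (simp add: distrib_right sum_distrib_right mult.assoc)
  have inv: "coeff_op [:1/a0:] * coeff_op [:a0:] = 1"
    using a0 by (simp add: coeff_op_mult[symmetric] pCons_one)
  have "K n r j * t - R = coeff_op [:a0:] * (uvar j * t)" using eq by simp
  then have "coeff_op [:1/a0:] * (K n r j * t - R) = (coeff_op [:1/a0:] * coeff_op [:a0:]) * (uvar j * t)"
    by (simp only: mult.assoc)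
  then have "uvar j * t = coeff_op [:1/a0:] * (K n r j * t - R)"
    by (simp only: inv mult_1)
  also have "\<dots> \<in> Eset n r"
    by (intro E_cmul E_diff E_K less.prems R)
  finally show ?case .
qed

lemma uvar_pow: "uvar i ^ k = Poly_Mapping.single (Poly_Mapping.single i k) 1"
  by (induction k) (simp_all add: uvar_def mult_single single_add[symmetric])

lemma prod_single_one:
  "(\<Prod>i\<in>A. Poly_Mapping.single (g i) (1::real poly)) = Poly_Mapping.single (\<Sum>i\<in>A. g i) 1"
  by (induction A rule: infinite_finite_induct) (simp_all add: mult_single)

lemma single_as_prod:
  "Poly_Mapping.single m p = coeff_op p * (\<Prod>i\<in>Poly_Mapping.keys m. uvar i ^ Poly_Mapping.lookup m i)"
  by (simp add: uvar_pow prod_single_one pm_sum_single coeff_op_def mult_single)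

lemma E_uvar_pow:
  assumes "r \<le> n" "j \<le> r" "t \<in> Eset n r"
  shows "uvar j ^ k * t \<in> Eset n r"
  by (induction k) (simp_all add: assms mult.assoc E_uvar)

lemma E_prod:
  assumes "r \<le> n" "finite A" "A \<subseteq> {0..r}" "t \<in> Eset n r"
  shows "(\<Prod>i\<in>A. uvar i ^ g i) * t \<in> Eset n r"
  using assms(2,3)
proof (induction A rule: finite_induct)
  case empty then show ?case using assms by simp
next
  case (insert x A)
  then show ?case using assms by (simp add: mult.assoc E_uvar_pow)
qed

lemma E_T:
  assumes "r \<le> n" "order_le r T"
  shows "T \<in> Eset n r"
proof -
  have "T = (\<Sum>m\<in>Poly_Mapping.keys T. Poly_Mapping.single m (Poly_Mapping.lookup T m))"
    by (simp add: pm_sum_single)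
  also have "\<dots> \<in> Eset n r"
  proof (rule E_sum)
    fix m assume m: "m \<in> Poly_Mapping.keys T"
    have "coeff_op (Poly_Mapping.lookup T m) \<in> Eset n r"
      using E_cmul[OF E_one] by (metis mult.right_neutral)
    then have "(\<Prod>i\<in>Poly_Mapping.keys m. uvar i ^ Poly_Mapping.lookup m i) * coeff_op (Poly_Mapping.lookup T m) \<in> Eset n r"
      using assms m unfolding order_le_def by (intro E_prod) auto
    then show "Poly_Mapping.single m (Poly_Mapping.lookup T m) \<in> Eset n r"
      by (simp add: single_as_prod mult.commute)
  qed
  finally show ?thesis .
qed



lemma ev_Kexp:
  assumes "finite S" "{M. c M \<noteq> 0} \<subseteq> S"
  shows "ev v x (K_expansion n r c) = (\<Sum>M\<in>S. poly (c M) x * (\<Prod>i\<in>#M. ev v x (K n r i)))"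
  by (simp add: Kexp_superset[OF assms] ev_sum ev_mult ev_prod_mset)

lemma ev_K_split:
  "ev v x (K n r q) = real ((n - q) choose (n - r)) * v q +
     (\<Sum>k = Suc 0..r - q. (-1) ^ k * real ((n - k - q) choose (n - r)) / fact k * x ^ k * v (k + q))"
  unfolding ev_K by (simp add: sum.atLeast_Suc_atMost[of 0])

lemma solve_v:
  assumes "r \<le> n"
  shows "\<exists>v. \<forall>i\<le>r. ev v x (K n r i) = w i"
proof -
  define Q where "Q j \<longleftrightarrow> (\<exists>v. \<forall>i. j \<le> i \<and> i \<le> r \<longrightarrow> ev v x (K n r i) = w i)" for j
  have "Q 0"
  proof (rule inc_induct[of 0 "Suc r" Q])
    show "0 \<le> Suc r" by simp
    show "Q (Suc r)" unfolding Q_def by auto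
  next
    fix q assume step: "0 \<le> q" "q < Suc r" "Q (Suc q)"
    then obtain v where v: "\<And>i. Suc q \<le> i \<Longrightarrow> i \<le> r \<Longrightarrow> ev v x (K n r i) = w i" unfolding Q_def by auto
    have qr: "q \<le> r" using step by simp
    define b0 where "b0 = real ((n - q) choose (n - r))"
    have b0: "b0 \<noteq> 0" unfolding b0_def using qr assms by simp
    define R where "R = (\<Sum>k = Suc 0..r - q. (-1) ^ k * real ((n - k - q) choose (n - r)) / fact k * x ^ k * v (k + q))"
    define v' where "v' = v(q := (w q - R) / b0)"
    have same: "ev v' x (K n r i) = ev v x (K n r i)" if "Suc q \<le> i" for i
      unfolding ev_K v'_def using that by (intro sum.cong) auto
    have RR: "(\<Sum>k = Suc 0..r - q. (-1) ^ k * real ((n - k - q) choose (n - r)) / fact k * x ^ k * v' (k + q)) = R"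
      unfolding R_def v'_def by (rule sum.cong) auto
    have "ev v' x (K n r q) = b0 * ((w q - R) / b0) + R"
      unfolding ev_K_split b0_def[symmetric] RR by (simp add: v'_def)
    also have "\<dots> = w q" using b0 by simp
    finally have "ev v' x (K n r q) = w q" .
    then have "\<forall>i. q \<le> i \<and> i \<le> r \<longrightarrow> ev v' x (K n r i) = w i"
    proof (intro allI impI)
      fix i assume i: "q \<le> i \<and> i \<le> r"
      show "ev v' x (K n r i) = w i"
      proof (cases "i = q")
        case True then show ?thesis using \<open>ev v' x (K n r q) = w q\<close> by simp
      next
        case False
        then have "Suc q \<le> i" using i by simp
        then show ?thesis using same v i by simp
      qed
    qed
    then show "Q q" unfolding Q_def by blast
  qed
  then show ?thesis unfolding Q_def by auto
qed

lemma Kexp_inj: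
  assumes rn: "r \<le> n" and c: "admissible r c" and d: "admissible r d"
    and eq: "K_expansion n r c = K_expansion n r d"
  shows "c = d"
proof
  fix M0
  define S where "S = {M. c M \<noteq> 0} \<union> {M. d M \<noteq> 0}"
  have fS: "finite S" using c d unfolding S_def admissible_def by auto
  have SV: "\<forall>M\<in>S. set_mset M \<subseteq> {0..r}" using c d unfolding S_def admissible_def by auto
  have zero: "poly (c M - d M) x = 0" if "M \<in> S" for M x
  proof (rule mp_zero[where V="{0..r}" and S=S and a="\<lambda>M. poly (c M - d M) x"])
    show "finite {0..r}" by simp
    show "finite S" by fact
    show "\<forall>M\<in>S. set_mset M \<subseteq> {0..r}" by fact
    show "M \<in> S" by fact
    fix w :: "nat \<Rightarrow> real"
    obtain v where v: "\<And>i. i \<le> r \<Longrightarrow> ev v x (K n r i) = w i" using solve_v[OF rn] by blast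
    have "ev v x (K_expansion n r c) - ev v x (K_expansion n r d) = 0" using eq by simp
    then have "(\<Sum>M\<in>S. poly (c M) x * (\<Prod>i\<in>#M. ev v x (K n r i))) -
       (\<Sum>M\<in>S. poly (d M) x * (\<Prod>i\<in>#M. ev v x (K n r i))) = 0"
      by (subst (asm) (1 2) ev_Kexp[OF fS]) (auto simp: S_def)
    then have "(\<Sum>M\<in>S. poly (c M - d M) x * (\<Prod>i\<in>#M. ev v x (K n r i))) = 0"
      by (simp add: sum_subtractf[symmetric] left_diff_distrib)
    moreover have "(\<Prod>i\<in>#M. ev v x (K n r i)) = (\<Prod>i\<in>#M. w i)" if "M \<in> S" for M
      by (intro arg_cong[where f=prod_mset] image_mset_cong v) (use SV that in fastforce)
    ultimately show "(\<Sum>M\<in>S. poly (c M - d M) x * (\<Prod>i\<in>#M. w i)) = 0"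
      by (metis (no_types, lifting) sum.cong)
  qed
  show "c M0 = d M0"
  proof (cases "M0 \<in> S")
    case True
    then have "c M0 - d M0 = 0" using zero poly_all_0_iff_0 by blast
    then show ?thesis by simp
  next
    case False then show ?thesis by (simp add: S_def)
  qed
qed

definition Qf :: "nat \<Rightarrow> nat \<Rightarrow> (nat multiset \<Rightarrow> real poly) \<Rightarrow> real poly \<Rightarrow> real poly" where
  "Qf n r c f = (\<Sum>M\<in>{M. c M \<noteq> 0}. c M * (\<Prod>i\<in>#M. KA n r i f))"

lemma apply_Kexp:
  assumes "admissible r c"
  shows "apply_op (K_expansion n r c) f x = poly (Qf n r c f) x"
proof -
  have "finite {M. c M \<noteq> 0}" using assms unfolding admissible_def by auto
  then show ?thesis
    unfolding apply_op_ev Qf_def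
    by (subst ev_Kexp) (auto simp: ev_K_KA poly_sum poly_prod_mset)
qed

lemma degree_prod_KA:
  assumes "r \<le> n" "degree f \<le> n" "set_mset M \<subseteq> {0..r}"
  shows "degree (\<Prod>i\<in>#M. KA n r i f) \<le> size M * (n - r)"
  using assms(3)
proof (induction M)
  case empty then show ?case by simp
next
  case (add x M)
  have "degree (\<Prod>i\<in>#add_mset x M. KA n r i f) \<le> degree (KA n r x f) + degree (\<Prod>i\<in>#M. KA n r i f)"
    by (simp add: degree_mult_le)
  also have "\<dots> \<le> (n - r) + size M * (n - r)"
    using add assms by (intro add_mono degree_KA) auto
  finally show ?case by simp
qed

lemma coeff_mult_bound:
  fixes p q :: "real poly"
  assumes "degree p \<le> a" "degree q \<le> b"
  shows "coeff (p * q) (a + b) = coeff p a * coeff q b"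
proof -
  have "coeff (p * q) (a + b) = (\<Sum>i\<le>a+b. coeff p i * coeff q (a + b - i))"
    by (rule coeff_mult)
  also have "\<dots> = (\<Sum>i\<le>a+b. if i = a then coeff p a * coeff q b else 0)"
  proof (rule sum.cong[OF refl])
    fix i assume "i \<in> {..a+b}"
    show "coeff p i * coeff q (a + b - i) = (if i = a then coeff p a * coeff q b else 0)"
    proof (cases "i < a")
      case True
      then have "coeff q (a + b - i) = 0" using assms by (intro coeff_eq_0) auto
      then show ?thesis using True by simp
    next
      case False
      show ?thesis
      proof (cases "i = a")
        case True then show ?thesis by simp
      next
        case F: False
        then have "coeff p i = 0" using assms False by (intro coeff_eq_0) auto
        then show ?thesis using F by simp
      qed
    qed
  qed
  also have "\<dots> = coeff p a * coeff q b" by simp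
  finally show ?thesis .
qed

lemma coeff_prod_KA:
  assumes "r \<le> n" "degree f \<le> n" "set_mset M \<subseteq> {0..r}"
  shows "coeff (\<Prod>i\<in>#M. KA n r i f) (size M * (n - r)) = (\<Prod>i\<in>#M. coeff (KA n r i f) (n - r))"
  using assms(3)
proof (induction M)
  case empty then show ?case by simp
next
  case (add x M)
  have "coeff (\<Prod>i\<in>#add_mset x M. KA n r i f) (size (add_mset x M) * (n - r))
     = coeff (KA n r x f * (\<Prod>i\<in>#M. KA n r i f)) ((n - r) + size M * (n - r))"
    by simp
  also have "\<dots> = coeff (KA n r x f) (n - r) * coeff (\<Prod>i\<in>#M. KA n r i f) (size M * (n - r))"
    using add assms by (intro coeff_mult_bound degree_KA degree_prod_KA) auto
  finally show ?case using add by simp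
qed

lemma Pset_iff: "p \<in> Pset s \<longleftrightarrow> (if s < 0 then p = 0 else degree p \<le> nat s)"
  by (simp add: Pset_def)

lemma arith1:
  fixes L n r d :: nat
  assumes "r \<le> n" "\<not> (int L * int r - (int L - 1) * int n < 0)"
    "d \<le> nat (int L * int r - (int L - 1) * int n)"
  shows "d + L * (n - r) \<le> n"
proof -
  have "int (L * (n - r)) = int L * int n - int L * int r"
    using assms(1) by (simp add: of_nat_diff algebra_simps)
  moreover have "int d \<le> int L * int r - int L * int n + int n"
    using assms(2,3) by (simp add: algebra_simps)
  ultimately show ?thesis by linarith
qed

lemma arith2:
  fixes L n r d :: nat
  assumes "r \<le> n" "int L * int r - (int L - 1) * int n < 0"
  shows "n < d + L * (n - r)"
proof -
  have "int (L * (n - r)) = int L * int n - int L * int r"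
    using assms(1) by (simp add: of_nat_diff algebra_simps)
  moreover have "int L * int r - int L * int n + int n < 0"
    using assms(2) by (simp add: algebra_simps)
  ultimately show ?thesis by linarith
qed

lemma arith3:
  fixes L n r d :: nat
  assumes "r \<le> n" "\<not> (int L * int r - (int L - 1) * int n < 0)"
    "\<not> d \<le> nat (int L * int r - (int L - 1) * int n)"
  shows "n < d + L * (n - r)"
proof -
  have "int (L * (n - r)) = int L * int n - int L * int r"
    using assms(1) by (simp add: of_nat_diff algebra_simps)
  moreover have "int d > int L * int r - int L * int n + int n"
    using assms(2,3) by (simp add: algebra_simps)
  ultimately show ?thesis by linarith
qed



lemma zero_Pset: "0 \<in> Pset s"
  by (simp add: Pset_def)

theorem mainTheorem3:
  fixes n r :: nat and T :: diffop
  assumes "r \<le> n" and "order_le r T"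
  shows "(\<exists>!c. admissible r c \<and> T = K_expansion n r c)
    \<and> (\<forall>c. admissible r c \<and> T = K_expansion n r c \<longrightarrow>
          (preserves n T \<longleftrightarrow>
            (\<forall>M. c M \<in> Pset (int (size M) * int r - (int (size M) - 1) * int n))))"
proof (intro conjI allI impI)
  have "T \<in> Eset n r" by (rule E_T[OF assms])
  then obtain c0 where c0: "admissible r c0" "T = K_expansion n r c0"
    unfolding Eset_def by blast
  show "\<exists>!c. admissible r c \<and> T = K_expansion n r c"
  proof (rule ex1I[of _ c0])
    show "admissible r c0 \<and> T = K_expansion n r c0" using c0 by simp
    fix c assume H: "admissible r c \<and> T = K_expansion n r c"
    show "c = c0"
    proof (rule Kexp_inj[OF assms(1)])
      show "admissible r c" using H by blast
      show "admissible r c0" by (rule c0(1))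
      show "K_expansion n r c = K_expansion n r c0" using H c0(2) by simp
    qed
  qed
next
  fix c assume cT: "admissible r c \<and> T = K_expansion n r c"
  then have adm: "admissible r c" and Tc: "T = K_expansion n r c" by blast+
  define S where "S = {M. c M \<noteq> 0}"
  have fS: "finite S" and SV: "\<forall>M\<in>S. set_mset M \<subseteq> {0..r}"
    using adm unfolding admissible_def S_def by auto
  have app: "\<And>f x. apply_op T f x = poly (Qf n r c f) x"
    using apply_Kexp[OF adm] Tc by simp
  show "preserves n T \<longleftrightarrow> (\<forall>M. c M \<in> Pset (int (size M) * int r - (int (size M) - 1) * int n))"
  proof
    assume pres: "preserves n T"
    show "\<forall>M. c M \<in> Pset (int (size M) * int r - (int (size M) - 1) * int n)"
    proof (rule ccontr)
      assume "\<not> ?thesis"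
      then obtain M0 where M0: "c M0 \<notin> Pset (int (size M0) * int r - (int (size M0) - 1) * int n)"
        by auto
      have M0S: "M0 \<in> S"
      proof (rule ccontr)
        assume "M0 \<notin> S"
        then have "c M0 = 0" by (simp add: S_def)
        then show False using M0 by (simp add: zero_Pset)
      qed
      define h where "h M = degree (c M) + size M * (n - r)" for M
      have hM0: "n < h M0"
      proof (cases "int (size M0) * int r - (int (size M0) - 1) * int n < 0")
        case True
        then show ?thesis unfolding h_def by (rule arith2[OF assms(1)])
      next
        case False
        then have "\<not> degree (c M0) \<le> nat (int (size M0) * int r - (int (size M0) - 1) * int n)"
          using M0 by (simp add: Pset_iff)
        then show ?thesis unfolding h_def by (rule arith3[OF assms(1) False])
      qed
      define D where "D = Max (h ` S)"
      have hD: "h M \<le> D" if "M \<in> S" for M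
        using fS that unfolding D_def by simp
      have "D \<in> h ` S" using fS M0S unfolding D_def by (intro Max_in) auto
      then obtain M1 where M1: "M1 \<in> S" "h M1 = D" by auto
      have nD: "n < D" using hM0 hD[OF M0S] by simp
      define SD where "SD = {M\<in>S. h M = D}"
      have key: "(\<Sum>M\<in>SD. lead_coeff (c M) * (\<Prod>i\<in>#M. w i)) = 0" for w
      proof -
        define \<alpha> where "\<alpha> i = (fact (n-r+i) / fact (n-r) :: real)" for i
        have \<alpha>: "\<alpha> i \<noteq> 0" for i by (simp add: \<alpha>_def)
        define f where "f = (\<Sum>i=0..r. monom (w i / \<alpha> i) (n-r+i))"
        have degf: "degree f \<le> n"
          unfolding f_def
        proof (rule degree_sum_le)
          fix i assume "i \<in> {0..r}"
          then show "degree (monom (w i / \<alpha> i) (n - r + i)) \<le> n"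
            using assms(1) by (intro order.trans[OF degree_monom_le]) auto
        qed simp
        have cf: "coeff f (n-r+i) = w i / \<alpha> i" if "i \<le> r" for i
          unfolding f_def coeff_sum coeff_monom using that by simp
        have lk: "coeff (KA n r i f) (n-r) = w i" if "i \<le> r" for i
          using lead_KA[OF that assms(1), of f] cf[OF that] \<alpha>[of i] by (simp add: \<alpha>_def)
        obtain q where q: "degree q \<le> n" "\<forall>x. apply_op T f x = poly q x"
          using pres degf unfolding preserves_def by blast
        have "poly (Qf n r c f) = poly q" using q(2) app by auto
        then have "Qf n r c f = q" by (simp add: poly_eq_poly_eq_iff)
        then have A: "coeff (Qf n r c f) D = 0" using q(1) nD by (simp add: coeff_eq_0)
        have B: "coeff (Qf n r c f) D = (\<Sum>M\<in>S. coeff (c M * (\<Prod>i\<in>#M. KA n r i f)) D)"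
          unfolding Qf_def S_def by (simp add: coeff_sum)
        have C: "(\<Sum>M\<in>S. coeff (c M * (\<Prod>i\<in>#M. KA n r i f)) D)
           = (\<Sum>M\<in>S. if h M = D then lead_coeff (c M) * (\<Prod>i\<in>#M. w i) else 0)"
        proof (rule sum.cong[OF refl])
          fix M assume MS: "M \<in> S"
          have degP: "degree (\<Prod>i\<in>#M. KA n r i f) \<le> size M * (n-r)"
            using degree_prod_KA assms(1) degf SV MS by auto
          show "coeff (c M * (\<Prod>i\<in>#M. KA n r i f)) D = (if h M = D then lead_coeff (c M) * (\<Prod>i\<in>#M. w i) else 0)"
          proof (cases "h M = D")
            case True
            then have DD: "D = degree (c M) + size M * (n - r)" unfolding h_def by simp
            have "coeff (c M * (\<Prod>i\<in>#M. KA n r i f)) D = lead_coeff (c M) * coeff (\<Prod>i\<in>#M. KA n r i f) (size M * (n - r))"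
              unfolding DD by (rule coeff_mult_bound[OF order.refl degP])
            also have "coeff (\<Prod>i\<in>#M. KA n r i f) (size M * (n - r)) = (\<Prod>i\<in>#M. coeff (KA n r i f) (n - r))"
              using coeff_prod_KA assms(1) degf SV MS by auto
            also have "\<dots> = (\<Prod>i\<in>#M. w i)"
              by (intro arg_cong[where f=prod_mset] image_mset_cong lk) (use SV MS in fastforce)
            finally show ?thesis using True by simp
          next
            case False
            then have "h M < D" using hD MS by fastforce
            have "degree (c M * (\<Prod>i\<in>#M. KA n r i f)) \<le> h M"
              unfolding h_def by (rule order.trans[OF degree_mult_le]) (use degP in simp)
            then have "coeff (c M * (\<Prod>i\<in>#M. KA n r i f)) D = 0"
              using \<open>h M < D\<close> by (intro coeff_eq_0) simp
            then show ?thesis using False by simp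
          qed
        qed
        have E: "(\<Sum>M\<in>S. if h M = D then lead_coeff (c M) * (\<Prod>i\<in>#M. w i) else 0)
           = (\<Sum>M\<in>SD. lead_coeff (c M) * (\<Prod>i\<in>#M. w i))"
          unfolding SD_def using fS by (simp add: sum.inter_filter)
        show ?thesis using A B C E by simp
      qed
      have "lead_coeff (c M1) = 0"
      proof (rule mp_zero[where V="{0..r}" and S=SD and a="\<lambda>M. lead_coeff (c M)"])
        show "finite {0..r}" by simp
        show "finite SD" using fS unfolding SD_def by simp
        show "\<forall>M\<in>SD. set_mset M \<subseteq> {0..r}" using SV unfolding SD_def by simp
        show "M1 \<in> SD" using M1 unfolding SD_def by simp
        show "(\<Sum>M\<in>SD. lead_coeff (c M) * (\<Prod>i\<in>#M. w i)) = 0" for w by (rule key)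
      qed
      then have "c M1 = 0" by simp
      with M1 show False by (simp add: S_def)
    qed
  next
    assume H: "\<forall>M. c M \<in> Pset (int (size M) * int r - (int (size M) - 1) * int n)"
    show "preserves n T" unfolding preserves_def
    proof (intro allI impI)
      fix f :: "real poly" assume degf: "degree f \<le> n"
      have "degree (Qf n r c f) \<le> n"
        unfolding Qf_def
      proof (rule degree_sum_le)
        show "finite {M. c M \<noteq> 0}" using fS S_def by simp
        fix M assume "M \<in> {M. c M \<noteq> 0}"
        then have cM: "c M \<noteq> 0" and MV: "set_mset M \<subseteq> {0..r}" using SV S_def by auto
        have nn: "\<not> (int (size M) * int r - (int (size M) - 1) * int n < 0)"
          and dg: "degree (c M) \<le> nat (int (size M) * int r - (int (size M) - 1) * int n)"
          using H[rule_format, of M] cM by (simp_all add: Pset_iff split: if_splits)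
        have "degree (c M * (\<Prod>i\<in>#M. KA n r i f)) \<le> degree (c M) + size M * (n - r)"
          by (rule order.trans[OF degree_mult_le]) (use degree_prod_KA[OF assms(1) degf MV] in simp)
        also have "\<dots> \<le> n" by (rule arith1[OF assms(1) nn dg])
        finally show "degree (c M * (\<Prod>i\<in>#M. KA n r i f)) \<le> n" .
      qed
      then show "\<exists>q. degree q \<le> n \<and> (\<forall>x. apply_op T f x = poly q x)" using app by blast
    qed
  qed
qed

end
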